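(* Let $\kappa$ be a regular cardinal, $\theta<\kappa$, and let $c:{}^{\kappa>}\omega\to\theta$ be a coloring. (1) There are $\nu^*\in{}^{\kappa>}\omega$ and $j<\theta$ such that for every $\nu\in{}^{\kappa>}\omega$ with $\nu^*\trianglelefteq\nu$ there is $\rho\in{}^{\kappa>}\omega$ with $\nu\trianglelefteq\rho$ and $c(\rho)=j$. (2) There is an embedding $h:{}^{\omega>}\omega\to{}^{\kappa>}\omega$ such that $h(\eta)^\frown\langle i\rangle\trianglelefteq h(\eta^\frown\langle i\rangle)$ for all $\eta\in{}^{\omega>}\omega$ and $i<\omega$, and the range of $h$ is monochromatic, i.e. $c(h(\eta))=c(h(\nu))$ for all $\eta,\nu\in{}^{\omega>}\omega$.
   Context: ${}^{\kappa>}\omega$ is the set of sequences of natural numbers indexed by ordinals $<\kappa$; $\trianglelefteq$ is the initial-segment order and $^\frown$ is concatenation. *)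

theory Defs
  imports Main "HOL-Library.Sublist"
begin

text \<open>The cardinal kappa is represented by a (cardinal) well-order r; an ordinal
  below kappa is an element alpha of Field r, identified with its strict initial
  segment underS r alpha.  A sequence in kappa>omega of length alpha is a partial
  function 'a => nat option whose domain is exactly underS r alpha.\<close>

definition kseq :: "'a rel \<Rightarrow> ('a \<Rightarrow> nat option) \<Rightarrow> bool" where
  "kseq r s \<longleftrightarrow> (\<exists>\<alpha>\<in>Field r. dom s = underS r \<alpha>)"

definition klen :: "'a rel \<Rightarrow> ('a \<Rightarrow> nat option) \<Rightarrow> 'a" where
  "klen r s = (THE \<alpha>. \<alpha> \<in> Field r \<and> dom s = underS r \<alpha>)"

definition kinit :: "('a \<Rightarrow> nat option) \<Rightarrow> ('a \<Rightarrow> nat option) \<Rightarrow> bool" where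
  "kinit s t \<longleftrightarrow> s \<subseteq>\<^sub>m t"

definition kapp1 :: "'a rel \<Rightarrow> ('a \<Rightarrow> nat option) \<Rightarrow> nat \<Rightarrow> ('a \<Rightarrow> nat option)" where
  "kapp1 r s i = s(klen r s \<mapsto> i)"

end

theory Submission
  imports Defs
begin

lemma wo_facts:
  assumes "Card_order r"
  shows "refl_on (Field r) r" "trans r" "antisym r" "total_on (Field r) r"
  using card_order_on_well_order_on[OF assms]
  unfolding well_order_on_def linear_order_on_def partial_order_on_def preorder_on_def
  by auto

lemma pad:
  assumes "a \<in> Field r" "dom s \<subseteq> underS r a"
  shows "\<exists>u. kseq r u \<and> kinit s u"
proof -
  define u where "u = (\<lambda>x. if x \<in> dom s then s x else if x \<in> underS r a then Some (0::nat) else None)"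
  have "dom u = underS r a" using assms(2) unfolding u_def dom_def by auto
  moreover have "s \<subseteq>\<^sub>m u" unfolding u_def map_le_def by auto
  ultimately show ?thesis using assms(1) unfolding kseq_def kinit_def by blast
qed

lemma bound:
  fixes r :: "'a rel"
  assumes "Cinfinite r" "regularCard r" "X \<subseteq> {s. kseq r s}"
    and ch: "\<forall>a\<in>X. \<forall>b\<in>X. kinit a b \<or> kinit b a" and cX: "(card_of X, r) \<in> ordLess"
  shows "\<exists>u. kseq r u \<and> (\<forall>a\<in>X. kinit a u)"
proof -
  have co: "Card_order r" using assms(1) by simp
  note wf = wo_facts[OF co]
  define L where "L = (\<lambda>s::'a \<Rightarrow> nat option. SOME \<alpha>. \<alpha> \<in> Field r \<and> dom s = underS r \<alpha>)"
  have L: "L s \<in> Field r \<and> dom s = underS r (L s)" if "s \<in> X" for s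
  proof -
    have "kseq r s" using that assms(3) by auto
    then show ?thesis unfolding L_def kseq_def by (rule someI_ex[OF bexE]) auto
  qed
  define K where "K = L ` X"
  have KF: "K \<subseteq> Field r" using L unfolding K_def by auto
  have "(card_of K, card_of X) \<in> ordLeq" unfolding K_def by (rule card_of_image)
  hence "(card_of K, r) \<in> ordLess" using cX ordLeq_ordLess_trans by blast
  hence "(card_of K, r) \<notin> ordIso" using not_ordLess_ordIso by blast
  hence "\<not> cofinal K r" using assms(2) KF unfolding regularCard_def by blast
  then obtain a where a: "a \<in> Field r" and aK: "\<forall>b\<in>K. \<not> (a \<noteq> b \<and> (a, b) \<in> r)"
    unfolding cofinal_def by blast
  have ba: "(b, a) \<in> r" if "b \<in> K" for b
  proof (cases "a = b")
    case True then show ?thesis using wf(1) a unfolding refl_on_def by auto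
  next
    case False
    then have "(a,b) \<notin> r" using aK that by auto
    then show ?thesis using wf(4) a KF that False unfolding total_on_def by blast
  qed
  have sub: "underS r b \<subseteq> underS r a" if "b \<in> K" for b
  proof
    fix x assume x: "x \<in> underS r b"
    then have xb: "(x,b) \<in> r" "x \<noteq> b" unfolding underS_def by auto
    have "(x,a) \<in> r" using wf(2) xb(1) ba[OF that] unfolding trans_def by blast
    moreover have "x \<noteq> a"
    proof
      assume "x = a"
      then have "a = b" using xb(1) ba[OF that] wf(3) unfolding antisym_def by blast
      then show False using xb(2) \<open>x = a\<close> by simp
    qed
    ultimately show "x \<in> underS r a" unfolding underS_def by auto
  qed
  define w where "w = (\<lambda>x. if \<exists>s\<in>X. x \<in> dom s then (SOME s. s \<in> X \<and> x \<in> dom s) x else None)"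
  have wd: "dom w \<subseteq> underS r a"
  proof
    fix x assume "x \<in> dom w"
    then obtain s where s: "s \<in> X" "x \<in> dom s" unfolding w_def by (auto split: if_splits simp: domIff)
    then show "x \<in> underS r a" using L[OF s(1)] sub[of "L s"] unfolding K_def by auto
  qed
  have wX: "kinit s w" if "s \<in> X" for s
    unfolding kinit_def map_le_def
  proof
    fix x assume x: "x \<in> dom s"
    define t where "t = (SOME s. s \<in> X \<and> x \<in> dom s)"
    have t: "t \<in> X \<and> x \<in> dom t" unfolding t_def using someI[of "\<lambda>s. s \<in> X \<and> x \<in> dom s" s] that x by blast
    have "w x = t x" unfolding w_def t_def using that x by auto
    moreover have "s x = t x" using ch that t x unfolding kinit_def map_le_def by (metis domIff)
    ultimately show "s x = w x" by simp
  qed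
  obtain u where "kseq r u" "kinit w u" using pad[OF a wd] by blast
  then show ?thesis using wX unfolding kinit_def using map_le_trans by blast
qed


lemma underS_inj:
  assumes "Card_order r" "a \<in> Field r" "b \<in> Field r" "underS r a = underS r b"
  shows "a = b"
proof (rule ccontr)
  assume ne: "a \<noteq> b"
  note wf = wo_facts[OF assms(1)]
  have "(a,b) \<in> r \<or> (b,a) \<in> r" using wf(4) assms(2,3) ne unfolding total_on_def by blast
  then show False
  proof
    assume "(a,b) \<in> r"
    then have "a \<in> underS r b" using ne unfolding underS_def by auto
    then show False using assms(4) unfolding underS_def by auto
  next
    assume "(b,a) \<in> r"
    then have "b \<in> underS r a" using ne unfolding underS_def by auto
    then show False using assms(4) unfolding underS_def by auto
  qed
qed

lemma klen_prop:
  assumes "Card_order r" "kseq r s"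
  shows "klen r s \<in> Field r \<and> dom s = underS r (klen r s)"
proof -
  have "\<exists>!\<alpha>. \<alpha> \<in> Field r \<and> dom s = underS r \<alpha>"
    using assms(2) underS_inj[OF assms(1)] unfolding kseq_def by metis
  then show ?thesis unfolding klen_def by (rule theI')
qed

lemma kapp_le:
  assumes "Card_order r" "kseq r s"
  shows "kinit s (kapp1 r s i)"
proof -
  have "klen r s \<notin> dom s" using klen_prop[OF assms] unfolding underS_def by auto
  then show ?thesis unfolding kinit_def kapp1_def map_le_def by auto
qed

lemma kapp_at: "kapp1 r s i (klen r s) = Some i"
  unfolding kapp1_def by simp

lemma kapp_ext:
  assumes "Cinfinite r" "kseq r s"
  shows "\<exists>t. kseq r t \<and> kinit (kapp1 r s i) t"
proof -
  have co: "Card_order r" using assms(1) by simp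
  note wf = wo_facts[OF co]
  note k = klen_prop[OF co assms(2)]
  obtain b where b: "b \<in> Field r" "klen r s \<noteq> b" "(klen r s, b) \<in> r"
    using Cinfinite_limit[OF conjunct1[OF k] assms(1)] by blast
  have "dom (kapp1 r s i) \<subseteq> underS r b"
  proof
    fix x assume "x \<in> dom (kapp1 r s i)"
    then have "x = klen r s \<or> x \<in> underS r (klen r s)" using k unfolding kapp1_def by auto
    then show "x \<in> underS r b"
    proof
      assume "x = klen r s" then show ?thesis using b unfolding underS_def by auto
    next
      assume x: "x \<in> underS r (klen r s)"
      then have "(x, b) \<in> r" using b(3) wf(2) unfolding underS_def trans_def by blast
      moreover have "x \<noteq> b"
      proof
        assume "x = b"
        then have "(b, klen r s) \<in> r" using x unfolding underS_def by auto
        then show False using b(2,3) wf(3) unfolding antisym_def by blast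
      qed
      ultimately show ?thesis unfolding underS_def by auto
    qed
  qed
  then show ?thesis using pad[OF b(1)] by blast
qed

lemma kinit_trans: "kinit a b \<Longrightarrow> kinit b c \<Longrightarrow> kinit a c"
  unfolding kinit_def using map_le_trans by blast

lemma embed:
  assumes co: "Card_order r" and ks: "\<forall>\<eta>. kseq r (h \<eta>)"
    and st: "\<forall>\<eta> i. kinit (kapp1 r (h \<eta>) i) (h (\<eta> @ [i]))"
  shows "prefix \<eta> \<nu> \<longleftrightarrow> kinit (h \<eta>) (h \<nu>)"
proof -
  have succ: "kinit (h \<eta>) (h (\<eta> @ [i]))" for \<eta> i
    using kapp_le[OF co ks[rule_format]] st kinit_trans by blast
  have mono: "kinit (h \<eta>) (h (\<eta> @ zs))" for \<eta> zs
  proof (induction zs rule: rev_induct)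
    case Nil then show ?case unfolding kinit_def by simp
  next
    case (snoc x xs)
    then show ?case using succ[of "\<eta> @ xs" x] kinit_trans by (metis append_assoc)
  qed
  have at: "h \<eta>' (klen r (h \<eta>)) = Some i" if pf: "prefix (\<eta> @ [i]) \<eta>'" for \<eta> \<eta>' i
  proof -
    obtain zs where "\<eta>' = \<eta> @ [i] @ zs" using pf unfolding prefix_def by auto
    then have "kinit (kapp1 r (h \<eta>) i) (h \<eta>')" using st mono kinit_trans by (metis append_assoc)
    then show ?thesis using kapp_at[of r "h \<eta>" i] unfolding kinit_def map_le_def by (metis domI)
  qed
  show ?thesis
  proof
    assume "prefix \<eta> \<nu>" then show "kinit (h \<eta>) (h \<nu>)" using mono unfolding prefix_def by auto
  next
    assume le: "kinit (h \<eta>) (h \<nu>)"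
    show "prefix \<eta> \<nu>"
    proof (cases rule: prefix_cases[of \<eta> \<nu>])
      case 1 then show ?thesis .
    next
      case 2
      then obtain i zs where e: "\<eta> = \<nu> @ i # zs"
        unfolding strict_prefix_def prefix_def by (cases "\<eta>") (auto, metis append_Nil2 neq_Nil_conv)
      then have "h \<eta> (klen r (h \<nu>)) = Some i" using at[of \<nu> i \<eta>] unfolding prefix_def by auto
      then have "h \<nu> (klen r (h \<nu>)) = Some i" using le unfolding kinit_def map_le_def by (metis domI)
      moreover have "klen r (h \<nu>) \<notin> dom (h \<nu>)" using klen_prop[OF co ks[rule_format]] unfolding underS_def by auto
      ultimately show ?thesis by auto
    next
      case 3
      then obtain as b bs c cs where d: "b \<noteq> c" "\<eta> = as @ b # bs" "\<nu> = as @ c # cs"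
        using parallel_decomp by blast
      have "h \<eta> (klen r (h as)) = Some b" using at[of as b \<eta>] d unfolding prefix_def by auto
      moreover have "h \<nu> (klen r (h as)) = Some c" using at[of as c \<nu>] d unfolding prefix_def by auto
      ultimately show ?thesis using le d(1) unfolding kinit_def map_le_def by (metis domI option.inject)
    qed
  qed
qed


lemma part1:
  fixes r :: "'a rel" and c :: "('a \<Rightarrow> nat option) \<Rightarrow> 'c" and \<Theta> :: "'c set"
  assumes cinf: "Cinfinite r" and reg: "regularCard r"
    and cT: "(card_of \<Theta>, r) \<in> ordLess"
    and col: "\<forall>s. kseq r s \<longrightarrow> c s \<in> \<Theta>"
  shows "\<exists>\<nu>s j. kseq r \<nu>s \<and> j \<in> \<Theta> \<and>
            (\<forall>\<nu>. kseq r \<nu> \<and> kinit \<nu>s \<nu> \<longrightarrow>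
                 (\<exists>\<rho>. kseq r \<rho> \<and> kinit \<nu> \<rho> \<and> c \<rho> = j))"
proof (rule ccontr)
  assume neg: "\<not> ?thesis"
  define dead where "dead j \<nu> \<longleftrightarrow> (\<forall>\<rho>. kseq r \<rho> \<and> kinit \<nu> \<rho> \<longrightarrow> c \<rho> \<noteq> j)" for j \<nu>
  have ext: "\<exists>\<nu>. kseq r \<nu> \<and> kinit \<nu>s \<nu> \<and> dead j \<nu>" if "kseq r \<nu>s" "j \<in> \<Theta>" for \<nu>s j
    using neg that unfolding dead_def by blast
  define A where "A = {G. G \<subseteq> \<Theta> \<times> {s. kseq r s} \<and> (\<forall>j a b. (j,a)\<in>G \<longrightarrow> (j,b)\<in>G \<longrightarrow> a=b)
      \<and> (\<forall>p\<in>G. \<forall>q\<in>G. kinit (snd p) (snd q) \<or> kinit (snd q) (snd p)) \<and> (\<forall>p\<in>G. dead (fst p) (snd p))}"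
  have "\<forall>C\<in>chains A. \<Union>C \<in> A"
  proof
    fix C assume C: "C \<in> chains A"
    then have CA: "C \<subseteq> A" and ch: "\<forall>X\<in>C. \<forall>Y\<in>C. X \<subseteq> Y \<or> Y \<subseteq> X"
      unfolding chains_def chain_subset_def by auto
    have 1: "\<Union>C \<subseteq> \<Theta> \<times> {s. kseq r s}" using CA unfolding A_def by auto
    have 2: "(\<forall>j a b. (j,a)\<in>\<Union>C \<longrightarrow> (j,b)\<in>\<Union>C \<longrightarrow> a=b)"
    proof (intro allI impI)
      fix j a b assume "(j,a)\<in>\<Union>C" "(j,b)\<in>\<Union>C"
      then obtain X Y where "X \<in> C" "Y \<in> C" "(j,a) \<in> X" "(j,b) \<in> Y" by auto
      then obtain Z where "Z \<in> C" "(j,a) \<in> Z" "(j,b) \<in> Z" using ch by blast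
      then have "Z \<in> A" using CA by blast
      then show "a = b" using \<open>(j,a) \<in> Z\<close> \<open>(j,b) \<in> Z\<close> unfolding A_def by blast
    qed
    have 3: "\<forall>p\<in>\<Union>C. \<forall>q\<in>\<Union>C. kinit (snd p) (snd q) \<or> kinit (snd q) (snd p)"
    proof (intro ballI)
      fix p q assume "p\<in>\<Union>C" "q\<in>\<Union>C"
      then obtain X Y where "X \<in> C" "Y \<in> C" "p \<in> X" "q \<in> Y" by auto
      then obtain Z where "Z \<in> C" "p \<in> Z" "q \<in> Z" using ch by blast
      then have "Z \<in> A" using CA by blast
      then show "kinit (snd p) (snd q) \<or> kinit (snd q) (snd p)" using \<open>p \<in> Z\<close> \<open>q \<in> Z\<close> unfolding A_def by blast
    qed
    have 4: "\<forall>p\<in>\<Union>C. dead (fst p) (snd p)" using CA unfolding A_def by auto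
    show "\<Union>C \<in> A" using 1 2 3 4 unfolding A_def by blast
  qed
  then obtain M where MA: "M \<in> A" and Mmax: "\<forall>X\<in>A. M \<subseteq> X \<longrightarrow> X = M"
    using Zorn_Lemma by blast
  have Msub: "M \<subseteq> \<Theta> \<times> {s. kseq r s}" and Msv: "\<forall>j a b. (j,a)\<in>M \<longrightarrow> (j,b)\<in>M \<longrightarrow> a=b"
    and Mch: "\<forall>p\<in>M. \<forall>q\<in>M. kinit (snd p) (snd q) \<or> kinit (snd q) (snd p)"
    and Mdead: "\<forall>p\<in>M. dead (fst p) (snd p)" using MA unfolding A_def by auto
  have "inj_on fst M" using Msv unfolding inj_on_def by auto
  moreover have "fst ` M \<subseteq> \<Theta>" using Msub by auto
  ultimately have "(card_of M, card_of \<Theta>) \<in> ordLeq" using card_of_ordLeq by blast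
  moreover have "(card_of (snd ` M), card_of M) \<in> ordLeq" by (rule card_of_image)
  ultimately have cM: "(card_of (snd ` M), r) \<in> ordLess" using cT ordLeq_ordLess_trans ordLeq_transitive by blast
  obtain u where u: "kseq r u" "\<forall>a\<in>snd ` M. kinit a u"
    using bound[OF cinf reg _ _ cM] Msub Mch by fastforce
  have full: "fst ` M = \<Theta>"
  proof (rule ccontr)
    assume "fst ` M \<noteq> \<Theta>"
    then obtain j where j: "j \<in> \<Theta>" "j \<notin> fst ` M" using Msub by auto
    obtain \<nu> where \<nu>: "kseq r \<nu>" "kinit u \<nu>" "dead j \<nu>" using ext[OF u(1) j(1)] by blast
    define M' where "M' = insert (j, \<nu>) M"
    have "M' \<in> A"
    proof -
      have 1: "M' \<subseteq> \<Theta> \<times> {s. kseq r s}" using Msub j \<nu> unfolding M'_def by auto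
      have 2: "\<forall>j a b. (j,a)\<in>M' \<longrightarrow> (j,b)\<in>M' \<longrightarrow> a=b"
      proof (intro allI impI)
        fix j' a b assume ab: "(j',a)\<in>M'" "(j',b)\<in>M'"
        show "a = b"
        proof (cases "j' = j")
          case True
          then have "(j',a) \<notin> M" "(j',b) \<notin> M" using j(2) by (force, force)
          then show ?thesis using ab unfolding M'_def by simp
        next
          case False
          then have "(j',a) \<in> M" "(j',b) \<in> M" using ab unfolding M'_def by simp_all
          then show ?thesis using Msv by blast
        qed
      qed
      have lt: "kinit a \<nu>" if "a \<in> snd ` M" for a using u(2) that \<nu>(2) kinit_trans by blast
      have 3: "\<forall>p\<in>M'. \<forall>q\<in>M'. kinit (snd p) (snd q) \<or> kinit (snd q) (snd p)"
      proof (intro ballI)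
        fix p q assume pq: "p \<in> M'" "q \<in> M'"
        have refl: "kinit x x" for x unfolding kinit_def by simp
        show "kinit (snd p) (snd q) \<or> kinit (snd q) (snd p)"
        proof (cases "p = (j,\<nu>)")
          case True
          then show ?thesis
          proof (cases "q = (j,\<nu>)")
            case False then have "q \<in> M" using pq unfolding M'_def by simp
            then show ?thesis using lt True by auto
          qed (simp add: refl)
        next
          case False then have pM: "p \<in> M" using pq unfolding M'_def by simp
          show ?thesis
          proof (cases "q = (j,\<nu>)")
            case False then have "q \<in> M" using pq unfolding M'_def by simp
            then show ?thesis using Mch pM by blast
          next
            case True then show ?thesis using lt pM by auto
          qed
        qed
      qed
      have 4: "\<forall>p\<in>M'. dead (fst p) (snd p)" using Mdead \<nu>(3) unfolding M'_def by auto
      show ?thesis using 1 2 3 4 unfolding A_def by blast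
    qed
    moreover have "M \<subseteq> M'" "M' \<noteq> M" using j(2) unfolding M'_def by force+
    ultimately show False using Mmax by blast
  qed
  have "c u \<in> \<Theta>" using col u(1) by blast
  then obtain a where "(c u, a) \<in> M" using full by force
  then have "dead (c u) a" "kinit a u" using Mdead u(2) by force+
  then show False using u(1) unfolding dead_def by blast
qed


theorem lemma2p13:
  fixes r :: "'a rel" and c :: "('a \<Rightarrow> nat option) \<Rightarrow> 'c" and \<Theta> :: "'c set"
  assumes "Cinfinite r" and "regularCard r"
    and "(card_of \<Theta>, r) \<in> ordLess"
    and "\<forall>s. kseq r s \<longrightarrow> c s \<in> \<Theta>"
  shows "(\<exists>\<nu>s j. kseq r \<nu>s \<and> j \<in> \<Theta> \<and>
            (\<forall>\<nu>. kseq r \<nu> \<and> kinit \<nu>s \<nu> \<longrightarrow>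
                 (\<exists>\<rho>. kseq r \<rho> \<and> kinit \<nu> \<rho> \<and> c \<rho> = j)))
       \<and> (\<exists>h :: nat list \<Rightarrow> ('a \<Rightarrow> nat option).
            (\<forall>\<eta>. kseq r (h \<eta>)) \<and>
            (\<forall>\<eta> \<nu>. prefix \<eta> \<nu> \<longleftrightarrow> kinit (h \<eta>) (h \<nu>)) \<and>
            (\<forall>\<eta> i. kinit (kapp1 r (h \<eta>) i) (h (\<eta> @ [i]))) \<and>
            (\<forall>\<eta> \<nu>. c (h \<eta>) = c (h \<nu>)))"
proof -
  have co: "Card_order r" using assms(1) by simp
  note P1 = part1[OF assms]
  then obtain \<nu>s j where ns: "kseq r \<nu>s" and P: "\<forall>\<nu>. kseq r \<nu> \<and> kinit \<nu>s \<nu> \<longrightarrow>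
                 (\<exists>\<rho>. kseq r \<rho> \<and> kinit \<nu> \<rho> \<and> c \<rho> = j)" by blast
  define pk where "pk t = (SOME \<rho>. kseq r \<rho> \<and> kinit t \<rho> \<and> c \<rho> = j)" for t
  define pe where "pe t = (SOME t'. kseq r t' \<and> kinit t t')" for t
  have pk: "kseq r (pk t) \<and> kinit t (pk t) \<and> c (pk t) = j" if "kseq r t" "kinit \<nu>s t" for t
    unfolding pk_def using P that by (metis (mono_tags, lifting) someI_ex)
  have pe: "kseq r (pe (kapp1 r t i)) \<and> kinit (kapp1 r t i) (pe (kapp1 r t i))" if "kseq r t" for t i
    unfolding pe_def using kapp_ext[OF assms(1) that, of i] by (metis (mono_tags, lifting) someI_ex)
  define g where "g = rec_list (pk \<nu>s) (\<lambda>i xs gx. pk (pe (kapp1 r gx i)))"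
  have g0: "g [] = pk \<nu>s" and gs: "g (i # xs) = pk (pe (kapp1 r (g xs) i))" for i xs
    unfolding g_def by simp_all
  have inv: "kseq r (g xs) \<and> kinit \<nu>s (g xs) \<and> c (g xs) = j \<and>
     (\<forall>i. kinit (kapp1 r (g xs) i) (g (i # xs)))" for xs
  proof (induction xs)
    case Nil
    have "kinit \<nu>s \<nu>s" unfolding kinit_def by simp
    then have A: "kseq r (g []) \<and> kinit \<nu>s (g []) \<and> c (g []) = j" using pk[OF ns] g0 by simp
    show ?case
    proof (intro conjI allI)
      fix i
      have "kseq r (pe (kapp1 r (g []) i))" "kinit (kapp1 r (g []) i) (pe (kapp1 r (g []) i))"
        using pe A by auto
      moreover have "kinit \<nu>s (pe (kapp1 r (g []) i))"
        using A calculation(2) kapp_le[OF co] kinit_trans by blast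
      ultimately show "kinit (kapp1 r (g []) i) (g [i])" using pk gs kinit_trans by metis
    qed (use A in auto)
  next
    case (Cons x xs)
    have B: "kseq r (g (i # xs)) \<and> kinit \<nu>s (g (i # xs)) \<and> c (g (i # xs)) = j
      \<and> kinit (kapp1 r (g xs) i) (g (i # xs))" if "kseq r (g xs)" "kinit \<nu>s (g xs)" for i xs
    proof -
      have "kseq r (pe (kapp1 r (g xs) i))" "kinit (kapp1 r (g xs) i) (pe (kapp1 r (g xs) i))"
        using pe that by auto
      moreover have "kinit \<nu>s (pe (kapp1 r (g xs) i))"
        using that calculation(2) kapp_le[OF co] kinit_trans by blast
      ultimately show ?thesis using pk gs kinit_trans by metis
    qed
    have A: "kseq r (g (x # xs)) \<and> kinit \<nu>s (g (x # xs)) \<and> c (g (x # xs)) = j"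
      using B Cons.IH by blast
    show ?case using A B[of "x # xs"] by blast
  qed
  define h where "h \<eta> = g (rev \<eta>)" for \<eta>
  have ks: "\<forall>\<eta>. kseq r (h \<eta>)" using inv unfolding h_def by blast
  have st: "\<forall>\<eta> i. kinit (kapp1 r (h \<eta>) i) (h (\<eta> @ [i]))" using inv unfolding h_def by simp
  have cc: "\<forall>\<eta> \<nu>. c (h \<eta>) = c (h \<nu>)" using inv unfolding h_def by simp
  have "\<forall>\<eta> \<nu>. prefix \<eta> \<nu> \<longleftrightarrow> kinit (h \<eta>) (h \<nu>)" using embed[OF co ks st] by blast
  then show ?thesis using P1 ks st cc by blast
qed

end
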